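(* If $q$ is even, each of the $q-1$ $T$-sls-pencils $T\mathcal S_\theta$ arches over a distinct $T$-plane. If $q$ is odd, then each of the $\frac{q-1}{2}$ $T$-sls-pencils $T\mathcal S_\theta$ with $N(\theta)$ a nonzero square in $\mathbb{F}_q$ arches over exactly two of the $T$-planes, and the remaining $\frac{q-1}{2}$ $T$-sls-pencils arch over no $T$-plane.
   Context: Let $q$ be a prime power, $\mathbb{F}_{q^3}^*=\mathbb{F}_{q^3}\setminus\{0\}$, $N(x)=x^{q^2+q+1}$. Points of $\mathrm{PG}(2,q^3)$ have homogeneous coordinates $(x,y,z)$. Let $T=(0,0,1)$ and $m_T$ the line $[0,0,1]$. For $\theta\in\mathbb{F}_{q^3}^*$ let $\mathcal S_\theta=\{(x\theta,x^q,0):x\in\mathbb{F}_{q^3}^*\}$; $\mathcal S_{\theta_1}=\mathcal S_{\theta_2}$ iff $N(\theta_1)=N(\theta_2)$, giving $q-1$ distinct sets, and the $q-1$ pencils $T\mathcal S_\theta=\{TX:X\in\mathcal S_\theta\}$ are the $T$-sls-pencils. For $\theta\in\mathbb{F}_{q^3}^*$, the $T$-plane $\Pi_\theta=\{(r\theta^{q+1},r^q,r^{q^2}\theta):r\in\mathbb{F}_{q^3}^*\}$ is a subplane of order $q$; $\Pi_\theta=\Pi_\kappa$ iff $N(\theta)=N(\kappa)$, so there are $q-1$ distinct $T$-planes. A $T$-sls-pencil arches over a $T$-plane if each of the $q^2+q+1$ lines of the pencil contains a unique point of the $T$-plane. *)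

theory Defs
  imports "HOL-Computational_Algebra.Primes"
begin

definition sc3 :: "'a::field \<Rightarrow> 'a \<times> 'a \<times> 'a \<Rightarrow> 'a \<times> 'a \<times> 'a" where
  "sc3 c v = (case v of (x, y, z) \<Rightarrow> (c * x, c * y, c * z))"

definition add3 :: "'a::field \<times> 'a \<times> 'a \<Rightarrow> 'a \<times> 'a \<times> 'a \<Rightarrow> 'a \<times> 'a \<times> 'a" where
  "add3 u v = (case u of (x, y, z) \<Rightarrow> case v of (x', y', z') \<Rightarrow> (x + x', y + y', z + z'))"

definition pt :: "'a::field \<times> 'a \<times> 'a \<Rightarrow> ('a \<times> 'a \<times> 'a) set" where
  "pt v = {sc3 c v | c. c \<noteq> 0}"

definition PG2 :: "('a::field \<times> 'a \<times> 'a) set set" where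
  "PG2 = {pt v | v. v \<noteq> (0, 0, 0)}"

definition join :: "('a::field \<times> 'a \<times> 'a) set \<Rightarrow> ('a \<times> 'a \<times> 'a) set \<Rightarrow> ('a \<times> 'a \<times> 'a) set set" where
  "join P Q = {R \<in> PG2. \<exists>u\<in>P. \<exists>v\<in>Q. \<exists>w\<in>R. \<exists>a b. w = add3 (sc3 a u) (sc3 b v)}"

definition Tpt :: "('a::field \<times> 'a \<times> 'a) set" where
  "Tpt = pt (0, 0, 1)"

definition normq :: "nat \<Rightarrow> 'a::field \<Rightarrow> 'a" where
  "normq q x = x ^ (q^2 + q + 1)"

definition slsS :: "nat \<Rightarrow> 'a::field \<Rightarrow> ('a \<times> 'a \<times> 'a) set set" where
  "slsS q \<theta> = {pt (x * \<theta>, x ^ q, 0) | x. x \<noteq> 0}"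

definition sls_pencil :: "nat \<Rightarrow> 'a::field \<Rightarrow> ('a \<times> 'a \<times> 'a) set set set" where
  "sls_pencil q \<theta> = {join Tpt X | X. X \<in> slsS q \<theta>}"

definition Tplane :: "nat \<Rightarrow> 'a::field \<Rightarrow> ('a \<times> 'a \<times> 'a) set set" where
  "Tplane q \<theta> = {pt (r * \<theta> ^ (q + 1), r ^ q, r ^ (q^2) * \<theta>) | r. r \<noteq> 0}"

definition T_sls_pencils :: "nat \<Rightarrow> ('a::field \<times> 'a \<times> 'a) set set set set" where
  "T_sls_pencils q = {sls_pencil q \<theta> | \<theta>. \<theta> \<noteq> 0}"

definition T_planes :: "nat \<Rightarrow> ('a::field \<times> 'a \<times> 'a) set set set" where
  "T_planes q = {Tplane q \<theta> | \<theta>. \<theta> \<noteq> 0}"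

definition arches :: "('a \<times> 'a \<times> 'a) set set set \<Rightarrow> ('a \<times> 'a \<times> 'a) set set \<Rightarrow> bool" where
  "arches Pen Pi \<longleftrightarrow> (\<forall>L\<in>Pen. \<exists>!P. P \<in> L \<and> P \<in> Pi)"

text \<open>F_q inside F_{q^3} is {b. b^q = b}.\<close>
definition nonzero_Fq_square :: "nat \<Rightarrow> 'a::field \<Rightarrow> bool" where
  "nonzero_Fq_square q a \<longleftrightarrow> (\<exists>b. b ^ q = b \<and> b \<noteq> 0 \<and> a = b ^ 2)"

end

theory Submission
  imports Defs "HOL-Algebra.Multiplicative_Group"
begin

definition Rty :: "'a::field ring" where
  "Rty = \<lparr>carrier = UNIV, monoid.mult = (\<lambda>x y. x * y), one = 1, ring.zero = 0, add = (\<lambda>x y. x + y)\<rparr>"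

lemma Rty_field: "Ring.field (Rty :: 'a::field ring)"
proof -
  have "\<exists>y. x + y = 0" for x :: 'a
    using add.right_inverse by blast
  moreover have "x \<noteq> 0 \<Longrightarrow> \<exists>y. x * y = 1" for x :: 'a
    by (rule exI[of _ "inverse x"]) auto
  ultimately show ?thesis
    unfolding Rty_def using add.right_inverse
    by unfold_locales (auto simp:algebra_simps Units_def)
qed

lemma Rty_pow: "x [^]\<^bsub>(Rty::'a::field ring)\<^esub> (n::nat) = x ^ n"
  by (induction n) (auto simp: Rty_def)

lemma finite_field_gen:
  "\<exists>g::'a::{finite,field}. g \<noteq> 0 \<and> (\<forall>x. x \<noteq> 0 \<longrightarrow> (\<exists>i. x = g ^ i))
      \<and> (\<forall>n. g ^ n = 1 \<longleftrightarrow> (card (UNIV::'a set) - 1) dvd n)"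
proof -
  interpret F: Ring.field "Rty :: 'a ring" by (rule Rty_field)
  interpret G: group "mult_of (Rty :: 'a ring)" by (rule F.field_mult_group)
  have fin: "finite (carrier (Rty :: 'a ring))" by (simp add: Rty_def)
  have "\<exists>a\<in>carrier (mult_of (Rty :: 'a ring)). carrier (mult_of (Rty :: 'a ring)) = {a[^]\<^bsub>(Rty :: 'a ring)\<^esub>i | i::nat . i \<in> UNIV}"
    using F.finite_field_mult_group_has_gen[OF fin] .
  then obtain a where a: "a \<in> carrier (mult_of (Rty :: 'a ring))"
     "carrier (mult_of (Rty :: 'a ring)) = {a[^]\<^bsub>(Rty :: 'a ring)\<^esub>i | i::nat . i \<in> UNIV}" by blast
  have finm: "finite (carrier (mult_of (Rty :: 'a ring)))" by (simp add: Rty_def)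
  have gen: "generate (mult_of (Rty :: 'a ring)) {a} = carrier (mult_of (Rty :: 'a ring))"
    using G.generate_pow_on_finite_carrier[OF finm a(1)] a(2) by (simp add: nat_pow_mult_of)
  have ord: "G.ord a = card (UNIV::'a set) - 1"
    using G.generate_pow_card[OF a(1)] gen
    by (simp add: Rty_def card_Diff_singleton)
  have "a \<noteq> 0" using a(1) by (simp add: Rty_def)
  moreover have "\<forall>x. x \<noteq> 0 \<longrightarrow> (\<exists>i. x = a ^ i)"
  proof (intro allI impI)
    fix x :: 'a assume "x \<noteq> 0"
    then have "x \<in> carrier (mult_of (Rty :: 'a ring))" by (simp add: Rty_def)
    then show "\<exists>i. x = a ^ i" unfolding a(2) Rty_pow by blast
  qed
  moreover have "\<forall>n. a ^ n = 1 \<longleftrightarrow> (card (UNIV::'a set) - 1) dvd n"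
    using G.pow_eq_id[OF a(1)] ord by (simp add: nat_pow_mult_of Rty_pow) (simp add: Rty_def)
  ultimately show ?thesis by blast
qed

locale ffq =
  fixes q :: nat and g :: "'a::{finite,field}"
  assumes cardF: "card (UNIV::'a set) = q^3"
    and q2: "2 \<le> q"
    and g0: "g \<noteq> 0"
    and gen: "\<And>x. x \<noteq> 0 \<Longrightarrow> \<exists>i. x = g ^ i"
    and ordg: "\<And>n. g ^ n = 1 \<longleftrightarrow> (q^3 - 1) dvd n"
begin

lemma m_eq: "q^3 - 1 = (q-1) * (q^2+q+1)"
proof -
  obtain k where "q = Suc k" using q2 by (cases q) auto
  then show ?thesis by (simp add: algebra_simps power3_eq_cube power2_eq_square)
qed

lemma s_pos: "0 < q^2+q+1" by simp
lemma s_nz: "q^2+q+1 \<noteq> 0" by simp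
lemma q1_nz: "q-1 \<noteq> 0" using q2 by simp
lemma g_m: "g^(q^3-1) = 1" using ordg[of "q^3-1"] by simp

lemma pow_m: "(x::'a) \<noteq> 0 \<Longrightarrow> x^(q^3-1) = 1"
proof -
  assume "x \<noteq> 0"
  then obtain i where "x = g^i" using gen by blast
  then have "x^(q^3-1) = (g^(q^3-1))^i" by (simp add: power_mult[symmetric] mult.commute)
  also have "\<dots> = 1" using g_m by simp
  finally show ?thesis .
qed

lemma frob3: "x^(q^3) = (x::'a)"
proof (cases "x = 0")
  case True
  then show ?thesis using q2 by simp
next
  case False
  have "q^3 = Suc (q^3 - 1)" using q2 by (simp add: Suc_diff_1)
  then have "x^(q^3) = x * x^(q^3-1)" by (metis power_Suc)
  then show ?thesis using pow_m[OF False] by simp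
qed

lemma N_q: "normq q x ^ q = normq q (x::'a)"
proof -
  have "normq q x ^ q = x^(q^3) * x^(q^2+q)"
    by (simp add: normq_def power_mult[symmetric] power_add[symmetric] algebra_simps power3_eq_cube power2_eq_square)
  also have "\<dots> = normq q x" by (simp add: frob3 normq_def power_add)
  finally show ?thesis .
qed

lemma N_mult: "normq q (x*y) = normq q x * normq q (y::'a)"
  by (simp add: normq_def power_mult_distrib)

lemma N_divide: "normq q (x/y) = normq q x / normq q (y::'a)"
  by (simp add: normq_def power_divide)

lemma N_pow: "normq q (x^k) = normq q (x::'a) ^ k"
  unfolding normq_def by (metis power_mult mult.commute)

lemma N_nz: "x \<noteq> 0 \<Longrightarrow> normq q (x::'a) \<noteq> 0"
  by (simp add: normq_def)

lemma N_powq: "normq q (x^q) = normq q (x::'a)"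
  by (simp add: N_pow N_q)

lemma N_powq2: "normq q (x^(q^2)) = normq q (x::'a)"
  by (simp add: N_pow power2_eq_square power_mult N_q)

lemma N_one_root: "y \<noteq> 0 \<Longrightarrow> normq q y = 1 \<Longrightarrow> \<exists>t::'a. t \<noteq> 0 \<and> t^(q-1) = y"
proof -
  assume y: "y \<noteq> 0" "normq q y = 1"
  then obtain i where i: "y = g^i" using gen by blast
  have "g^(i*(q^2+q+1)) = 1" using y(2) i unfolding normq_def by (metis power_mult)
  then have "(q-1)*(q^2+q+1) dvd i*(q^2+q+1)" using ordg m_eq by metis
  then have "(q-1) dvd i" using dvd_times_right_cancel_iff[OF s_nz] by blast
  then obtain k where k: "i = (q-1)*k" by blast
  show ?thesis
    by (rule exI[of _ "g^k"]) (simp add: g0 i k power_mult[symmetric] mult.commute)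
qed

lemma N_root_one: "t \<noteq> 0 \<Longrightarrow> normq q (t^(q-1)) = (1::'a)"
  unfolding normq_def by (metis power_mult m_eq pow_m)

lemma N_surj: "b \<noteq> 0 \<Longrightarrow> b^q = b \<Longrightarrow> \<exists>\<kappa>::'a. \<kappa> \<noteq> 0 \<and> normq q \<kappa> = b"
proof -
  assume b: "b \<noteq> 0" "b^q = b"
  then obtain i where i: "b = g^i" using gen by blast
  have "q = Suc (q-1)" using q2 by simp
  then have "b^q = b * b^(q-1)" by (metis power_Suc)
  then have "b^(q-1) = 1" using b by simp
  then have "g^(i*(q-1)) = 1" using i by (simp add: power_mult)
  then have "(q^2+q+1)*(q-1) dvd i*(q-1)" using ordg m_eq by (metis mult.commute)
  then have "(q^2+q+1) dvd i" using dvd_times_right_cancel_iff[OF q1_nz] by blast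
  then obtain k where k: "i = (q^2+q+1)*k" by blast
  show ?thesis
    unfolding normq_def by (rule exI[of _ "g^k"]) (metis g0 i k power_mult mult.commute power_not_zero)
qed

lemma g_pow_eq: "g^a = g^b \<longleftrightarrow> a mod (q^3-1) = b mod (q^3-1)"
proof -
  have *: "g^a = g^b \<longleftrightarrow> a mod (q^3-1) = b mod (q^3-1)" if "a \<le> b" for a b
  proof -
    have "g^b = g^a * g^(b-a)" using that by (simp add: power_add[symmetric])
    then have "g^a = g^b \<longleftrightarrow> g^(b-a) = 1" using g0 by auto
    also have "\<dots> \<longleftrightarrow> (q^3-1) dvd (b-a)" by (rule ordg)
    also have "\<dots> \<longleftrightarrow> b mod (q^3-1) = a mod (q^3-1)" using that by (simp add: mod_eq_dvd_iff_nat)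
    finally show ?thesis by auto
  qed
  show ?thesis
  proof (cases "a \<le> b")
    case True then show ?thesis using * by blast
  next
    case False then show ?thesis using *[of b a] by auto
  qed
qed

abbreviation h :: 'a where "h \<equiv> normq q g"

lemma h_pow_eq: "h^i = h^j \<longleftrightarrow> i mod (q-1) = j mod (q-1)"
proof -
  have "h^i = g^((q^2+q+1)*i)" unfolding normq_def by (metis power_mult)
  moreover have "h^j = g^((q^2+q+1)*j)" unfolding normq_def by (metis power_mult)
  ultimately have "h^i = h^j \<longleftrightarrow> ((q^2+q+1)*i) mod ((q^2+q+1)*(q-1)) = ((q^2+q+1)*j) mod ((q^2+q+1)*(q-1))"
    using g_pow_eq m_eq by (simp add: mult.commute)
  also have "\<dots> \<longleftrightarrow> (q^2+q+1) * (i mod (q-1)) = (q^2+q+1) * (j mod (q-1))" by (simp only: mod_mult_mult1)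
  also have "\<dots> \<longleftrightarrow> i mod (q-1) = j mod (q-1)" by (rule mult_left_cancel[OF s_nz])
  finally show ?thesis .
qed

lemma h_nz: "h \<noteq> 0" using g0 by (simp add: normq_def)

lemma h_pow_mod: "h^i = h^(i mod (q-1))"
  using h_pow_eq by simp

lemma Fq_eq: "{b::'a. b^q = b \<and> b \<noteq> 0} = (\<lambda>k. h ^ k) ` {..<q-1}"
proof (intro equalityI subsetI)
  fix b assume "b \<in> {b::'a. b^q = b \<and> b \<noteq> 0}"
  then obtain \<kappa> where k: "\<kappa> \<noteq> 0" "normq q \<kappa> = b" using N_surj by blast
  obtain i where i: "\<kappa> = g^i" using gen k(1) by blast
  have "b = h^i" using k i N_pow by simp
  then have "b = h^(i mod (q-1))" using h_pow_mod by simp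
  moreover have "i mod (q-1) < q-1" using q2 by simp
  ultimately show "b \<in> (\<lambda>k. h ^ k) ` {..<q-1}" by blast
next
  fix b assume "b \<in> (\<lambda>k. h ^ k) ` {..<q-1}"
  then obtain k where "b = h^k" by blast
  then have "b = normq q (g^k)" using N_pow by simp
  then show "b \<in> {b::'a. b^q = b \<and> b \<noteq> 0}" using N_q N_nz g0 by simp
qed

lemma Fq_inj: "inj_on (\<lambda>k. h ^ k) {..<q-1}"
  by (auto simp: inj_on_def h_pow_eq)

lemma N_image: "normq q ` {\<theta>::'a. \<theta> \<noteq> 0} = {b::'a. b^q = b \<and> b \<noteq> 0}"
  using N_surj N_q N_nz by fastforce


lemma h_q: "(h^j)^q = h^j"
  by (metis N_q power_mult mult.commute)

lemma q3_ge: "q^3 \<ge> 8"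
proof -
  have "(2::nat)^3 \<le> q^3" by (rule power_mono[OF q2]) simp
  then show ?thesis by simp
qed

lemma sq_iff: assumes "odd q" "k < q-1" shows "nonzero_Fq_square q (h^k) \<longleftrightarrow> even k"
proof
  assume "nonzero_Fq_square q (h^k)"
  then obtain b where b: "b^q = b" "b \<noteq> 0" "h^k = b^2" unfolding nonzero_Fq_square_def by blast
  then have "b \<in> (\<lambda>k. h ^ k) ` {..<q-1}" using Fq_eq by blast
  then obtain j where "b = h^j" by blast
  then have "h^k = h^(2*j)" using b(3) by (simp add: power_mult[symmetric] mult.commute)
  then have "k mod (q-1) = (2*j) mod (q-1)" using h_pow_eq by blast
  then have kk: "k = (2*j) mod (q-1)" using assms(2) by simp
  have "Suc (q-1) = q" using q2 by simp
  then have "even (q-1)" using assms(1) by (metis even_Suc)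
  then have "2 dvd (2*j) mod (q-1)" using dvd_mod[of 2 "2*j" "q-1"] by simp
  then show "even k" using kk by simp
next
  assume "even k"
  then obtain j where j: "k = 2*j" by blast
  have "(h^j)^q = h^j" by (rule h_q)
  moreover have "h^j \<noteq> 0" using h_nz by simp
  moreover have "h^k = (h^j)^2" using j by (simp add: power_mult[symmetric] mult.commute)
  ultimately show "nonzero_Fq_square q (h^k)" unfolding nonzero_Fq_square_def by blast
qed

lemma odd_neg1: assumes "odd q" shows "(-1::'a) \<noteq> 1"
proof
  assume neg: "(-1::'a) = 1"
  define m where "m = q^3 - 1"
  have sm: "Suc m = q^3" unfolding m_def using q3_ge by simp
  have "odd (q^3)" using assms by simp
  then have "even m" using sm by (metis even_Suc)
  then have m2: "2 * (m div 2) = m" by simp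
  have "(g^(m div 2))^2 = g^m" by (metis m2 power_mult mult.commute)
  also have "\<dots> = 1" using g_m m_def by simp
  finally have "g^(m div 2) = 1 \<or> g^(m div 2) = -1" using power2_eq_1_iff by blast
  then have "g^(m div 2) = 1" using neg by auto
  then have dv: "m dvd m div 2" using ordg m_def by blast
  have m7: "m \<ge> 7" using sm q3_ge by simp
  have pos: "0 < m div 2" using m7 by simp
  have lt: "m div 2 < m" using m7 by simp
  show False using dvd_imp_le[OF dv pos] lt by simp
qed

lemma even_sq_inj: assumes "even q" "(a::'a) \<noteq> 0" "b \<noteq> 0" "a^2 = b^2" shows "a = b"
proof -
  define c where "c = a / b"
  have "c^2 = 1" using assms by (simp add: c_def power_divide)
  have "c \<noteq> 0" using assms by (simp add: c_def)
  then obtain i where i: "c = g^i" using gen by blast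
  have "g^(2*i) = 1" using \<open>c^2 = 1\<close> i by (simp add: power_mult mult.commute)
  then have "(q^3-1) dvd 2*i" using ordg by blast
  then obtain k where k: "2*i = (q^3-1)*k" by blast
  have sm: "Suc (q^3-1) = q^3" using q3_ge by simp
  have "even (q^3)" using assms(1) by simp
  then have od: "odd (q^3-1)" using sm by (metis even_Suc)
  have "even ((q^3-1)*k)" using k by (metis dvd_triv_left)
  then have "even k" using od even_mult_iff by blast
  then obtain l where "k = 2*l" by blast
  then have "i = (q^3-1)*l" using k by simp
  then have "c = 1" using i g_m by (simp add: power_mult)
  then show ?thesis using assms by (simp add: c_def)
qed

end

lemma sc3_simp[simp]: "sc3 c (x,y,z) = (c*x, c*y, c*z)" by (simp add: sc3_def)
lemma add3_simp[simp]: "add3 (x,y,z) (x',y',z') = (x+x', y+y', z+z')" by (simp add: add3_def)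

lemma mem_pt: "w \<in> pt v \<longleftrightarrow> (\<exists>c. c \<noteq> 0 \<and> w = sc3 c v)" by (auto simp: pt_def)

lemma sc3_sc3: "sc3 d (sc3 c v) = sc3 (d*c) (v::'a::field \<times> 'a \<times> 'a)"
  by (cases v) (simp add: mult.assoc)

lemma pt_sc3: "(c::'a::field) \<noteq> 0 \<Longrightarrow> pt (sc3 c v) = pt v"
proof -
  assume c: "c \<noteq> 0"
  show ?thesis
  proof (intro equalityI subsetI)
    fix w assume "w \<in> pt (sc3 c v)"
    then obtain d where d: "d \<noteq> 0" "w = sc3 d (sc3 c v)" unfolding mem_pt by blast
    have "d*c \<noteq> 0" using c d by simp
    moreover have "w = sc3 (d*c) v" using d by (simp add: sc3_sc3)
    ultimately show "w \<in> pt v" unfolding mem_pt by blast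
  next
    fix w assume "w \<in> pt v"
    then obtain d where d: "d \<noteq> 0" "w = sc3 d v" unfolding mem_pt by blast
    have "d/c \<noteq> 0" using c d by simp
    moreover have "w = sc3 (d/c) (sc3 c v)" using d c by (simp add: sc3_sc3)
    ultimately show "w \<in> pt (sc3 c v)" unfolding mem_pt by blast
  qed
qed

lemma pt_self: "v \<in> pt (v::'a::field \<times> 'a \<times> 'a)"
  unfolding mem_pt by (rule exI[of _ 1]) (cases v, simp)

lemma pt_eq_imp: "pt v = pt (w::'a::field \<times> 'a \<times> 'a) \<Longrightarrow> \<exists>c. c \<noteq> 0 \<and> w = sc3 c v"
proof -
  assume e: "pt v = pt w"
  have "w \<in> pt v" using pt_self[of w] e by simp
  then show ?thesis unfolding mem_pt .
qed

lemma on_line: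
  fixes a1 a2 v1 v2 v3 :: "'a::field"
  assumes "a2 \<noteq> 0" "v2 \<noteq> 0"
  shows "pt (v1,v2,v3) \<in> Defs.join Tpt (pt (a1,a2,0)) \<longleftrightarrow> v1 * a2 = v2 * a1"
proof
  assume "pt (v1,v2,v3) \<in> Defs.join Tpt (pt (a1,a2,0))"
  then have "\<exists>u\<in>Tpt. \<exists>v\<in>pt (a1,a2,0). \<exists>w\<in>pt (v1,v2,v3). \<exists>a b. w = add3 (sc3 a u) (sc3 b v)"
    unfolding Defs.join_def mem_Collect_eq by (rule conjunct2)
  then obtain u v w a b where u: "u \<in> Tpt" and v: "v \<in> pt (a1,a2,0)" and w: "w \<in> pt (v1,v2,v3)"
    and e: "w = add3 (sc3 a u) (sc3 b v)" by blast
  have "\<exists>d. d \<noteq> 0 \<and> u = sc3 d (0,0,1)" using u unfolding Tpt_def mem_pt .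
  then obtain d where d: "u = sc3 d (0,0,1)" by blast
  have "\<exists>f. f \<noteq> 0 \<and> v = sc3 f (a1,a2,0)" using v unfolding mem_pt .
  then obtain f where f: "v = sc3 f (a1,a2,0)" by blast
  have "\<exists>c. c \<noteq> 0 \<and> w = sc3 c (v1,v2,v3)" using w unfolding mem_pt .
  then obtain c where c: "c \<noteq> 0" "w = sc3 c (v1,v2,v3)" by blast
  have "sc3 c (v1,v2,v3) = add3 (sc3 a (sc3 d (0,0,1))) (sc3 b (sc3 f (a1,a2,0)))"
    using e d f c(2) by simp
  then have e1: "c*v1 = b*(f*a1)" and e2: "c*v2 = b*(f*a2)" by simp_all
  have "c * (v1 * a2) = c * (v2 * a1)"
    using e1 e2 by (simp add: algebra_simps)
  then show "v1 * a2 = v2 * a1" using c by simp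
next
  assume h: "v1 * a2 = v2 * a1"
  have R: "pt (v1,v2,v3) \<in> PG2" using assms unfolding PG2_def by auto
  have u: "(0,0,1) \<in> (Tpt :: ('a\<times>'a\<times>'a) set)" unfolding Tpt_def by (rule pt_self)
  have v: "(a1,a2,0) \<in> pt (a1,a2,0)" by (rule pt_self)
  have w: "(v1,v2,v3) \<in> pt (v1,v2,v3)" by (rule pt_self)
  have v1: "v1 = v2 / a2 * a1" using h assms by (simp add: field_simps)
  have e: "(v1,v2,v3) = add3 (sc3 v3 (0,0,1)) (sc3 (v2/a2) (a1,a2,0))"
    using v1 assms by simp
  show "pt (v1,v2,v3) \<in> Defs.join Tpt (pt (a1,a2,0))"
    unfolding Defs.join_def
    apply (rule CollectI, rule conjI[OF R])
    apply (rule bexI[OF _ u], rule bexI[OF _ v], rule bexI[OF _ w])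
    by (rule exI, rule exI, rule e)
qed


lemma aux_kk: "u = t * (k2 / k1) \<Longrightarrow> (k1::'a::field) \<noteq> 0 \<Longrightarrow> t \<noteq> 0 \<Longrightarrow> k2 = k1 * u / t"
  by (simp add: field_simps)
lemma aux_c1: "(u::'a::field) \<noteq> 0 \<Longrightarrow> X * (w * u) / (u * t) = X * w / t"
  by (simp add: field_simps)
lemma aux_a1: "(u::'a::field) \<noteq> 0 \<Longrightarrow> r * (X * w / t) = w * u * (r / (u * t) * X)"
  by (simp add: field_simps)
lemma aux_a2: "(u::'a::field) \<noteq> 0 \<Longrightarrow> w \<noteq> 0 \<Longrightarrow> R = w * u * (R / (w * u))"
  by (simp add: field_simps)
lemma aux_a3: "(w::'a::field) \<noteq> 0 \<Longrightarrow> R * (k1 * u / t) = w * u * (R / (t * w) * k1)"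
  by (simp add: field_simps)
lemma aux_th: "U = u * (t1 / t2) \<Longrightarrow> (u::'a::field) \<noteq> 0 \<Longrightarrow> t2 \<noteq> 0 \<Longrightarrow> t1 = t2 * U / u"
  by (simp add: field_simps)
lemma aux_x1: "(u::'a::field) \<noteq> 0 \<Longrightarrow> x * (t2 * U / u) = U * (x / u * t2)"
  by (simp add: field_simps)
lemma aux_x2: "(U::'a::field) \<noteq> 0 \<Longrightarrow> X = U * (X / U)"
  by (simp add: field_simps)

lemma card_image_eqrel:
  assumes "\<And>x y. x \<in> D \<Longrightarrow> y \<in> D \<Longrightarrow> f x = f y \<longleftrightarrow> g x = g y"
  shows "card (f ` D) = card (g ` D)"
proof -
  define \<phi> where "\<phi> = (\<lambda>y. f (inv_into D g y))"
  have img: "\<phi> ` (g ` D) = f ` D"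
  proof (intro equalityI subsetI)
    fix z assume "z \<in> \<phi> ` (g ` D)"
    then obtain x where x: "x \<in> D" "z = \<phi> (g x)" by blast
    have "inv_into D g (g x) \<in> D" using x(1) by (rule inv_into_into[OF imageI])
    moreover have "g (inv_into D g (g x)) = g x" using x(1) by (simp add: f_inv_into_f)
    ultimately have "f (inv_into D g (g x)) = f x" using assms x(1) by blast
    then show "z \<in> f ` D" using x by (simp add: \<phi>_def)
  next
    fix z assume "z \<in> f ` D"
    then obtain x where x: "x \<in> D" "z = f x" by blast
    have "inv_into D g (g x) \<in> D" using x(1) by (rule inv_into_into[OF imageI])
    moreover have "g (inv_into D g (g x)) = g x" using x(1) by (simp add: f_inv_into_f)
    ultimately have "f (inv_into D g (g x)) = f x" using assms x(1) by blast
    then show "z \<in> \<phi> ` (g ` D)" using x by (force simp: \<phi>_def)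
  qed
  have "inj_on \<phi> (g ` D)"
  proof (rule inj_onI)
    fix a b assume a: "a \<in> g ` D" and b: "b \<in> g ` D" and e: "\<phi> a = \<phi> b"
    have ia: "inv_into D g a \<in> D" using a by (rule inv_into_into)
    have ib: "inv_into D g b \<in> D" using b by (rule inv_into_into)
    have "g (inv_into D g a) = g (inv_into D g b)"
      using assms[OF ia ib] e by (simp add: \<phi>_def)
    then show "a = b" using a b by (simp add: f_inv_into_f)
  qed
  then have "card (\<phi> ` (g ` D)) = card (g ` D)" by (rule card_image)
  then show ?thesis using img by simp
qed

context ffq
begin

lemma Tplane_mem: "P \<in> Tplane q \<kappa> \<longleftrightarrow> (\<exists>r. r \<noteq> 0 \<and> P = pt (r * \<kappa>^(q+1), r^q, r^(q^2) * (\<kappa>::'a)))"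
  unfolding Tplane_def by blast

lemma sls_mem: "L \<in> sls_pencil q \<theta> \<longleftrightarrow> (\<exists>x. x \<noteq> 0 \<and> L = Defs.join Tpt (pt (x * (\<theta>::'a), x^q, 0)))"
  unfolding sls_pencil_def slsS_def by blast

lemma qSuc: "q = Suc (q-1)" using q2 by simp

lemma pow_q_split: "(x::'a)^q = x * x^(q-1)"
  by (subst qSuc) (simp only: power_Suc)

lemma pow_q1: "(x::'a) \<noteq> 0 \<Longrightarrow> x^(q-1) = x^q / x"
  using pow_q_split[of x] by (simp add: field_simps)

lemma Tpt_r_eq:
  assumes "(r::'a) \<noteq> 0" "r' \<noteq> 0" "r'^(q-1) = r^(q-1)"
  shows "pt (r' * \<kappa>^(q+1), r'^q, r'^(q^2) * \<kappa>) = pt (r * \<kappa>^(q+1), r^q, r^(q^2) * \<kappa>)"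
proof -
  define c where "c = r' / r"
  have c0: "c \<noteq> 0" using assms by (simp add: c_def)
  have "c^(q-1) = 1" using assms by (simp add: c_def power_divide)
  then have cq: "c^q = c" using pow_q_split[of c] by simp
  have cq2: "c^(q^2) = c" by (simp add: power2_eq_square power_mult cq)
  have r': "r' = c * r" using assms by (simp add: c_def)
  have e0: "r' * \<kappa>^(q+1) = c * (r * \<kappa>^(q+1))" by (simp add: r')
  have e1: "r'^q = c * r^q" by (simp add: r' power_mult_distrib cq)
  have e2: "r'^(q^2) = c * r^(q^2)" by (simp only: r' power_mult_distrib cq2)
  have eq: "(r' * \<kappa>^(q+1), r'^q, r'^(q^2) * \<kappa>) = sc3 c (r * \<kappa>^(q+1), r^q, r^(q^2) * \<kappa>)"
    by (simp only: sc3_simp e1 e2 e0 mult.assoc)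
  have "pt (r' * \<kappa>^(q+1), r'^q, r'^(q^2) * \<kappa>) = pt (sc3 c (r * \<kappa>^(q+1), r^q, r^(q^2) * \<kappa>))"
    by (simp only: eq)
  also have "\<dots> = pt (r * \<kappa>^(q+1), r^q, r^(q^2) * \<kappa>)" by (rule pt_sc3[OF c0])
  finally show ?thesis .
qed

lemma line_cond:
  assumes "(r::'a) \<noteq> 0" "x \<noteq> 0" "\<theta> \<noteq> 0"
  shows "pt (r * \<kappa>^(q+1), r^q, r^(q^2) * \<kappa>) \<in> Defs.join Tpt (pt (x * \<theta>, x^q, 0))
     \<longleftrightarrow> r^(q-1) = \<kappa>^(q+1) * x^q / (x * \<theta>)"
proof -
  have "pt (r * \<kappa>^(q+1), r^q, r^(q^2) * \<kappa>) \<in> Defs.join Tpt (pt (x * \<theta>, x^q, 0))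
     \<longleftrightarrow> r * \<kappa>^(q+1) * x^q = r^q * (x * \<theta>)"
    by (rule on_line) (use assms in simp_all)
  also have "\<dots> \<longleftrightarrow> r^(q-1) = \<kappa>^(q+1) * x^q / (x * \<theta>)"
    using assms apply (simp add: pow_q_split[of r] field_simps) by (rule eq_commute)
  finally show ?thesis .
qed

lemma N_q1: "normq q ((x::'a)^(q+1)) = normq q x ^ 2"
proof -
  have "normq q (x^(q+1)) = normq q (x^q * x)" by (simp only: power_add power_one_right)
  also have "\<dots> = normq q x * normq q x" by (simp only: N_mult N_powq)
  finally show ?thesis by (simp add: power2_eq_square)
qed

lemma arches_iff:
  assumes th: "(\<theta>::'a) \<noteq> 0" and ka: "\<kappa> \<noteq> 0"
  shows "arches (sls_pencil q \<theta>) (Tplane q \<kappa>) \<longleftrightarrow> normq q \<theta> = (normq q \<kappa>)^2"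
proof
  assume a: "arches (sls_pencil q \<theta>) (Tplane q \<kappa>)"
  have "Defs.join Tpt (pt (1 * \<theta>, 1^q, 0)) \<in> sls_pencil q \<theta>"
    unfolding sls_mem by (rule exI[of _ 1]) simp
  then obtain P where P: "P \<in> Defs.join Tpt (pt (1 * \<theta>, 1^q, 0))" "P \<in> Tplane q \<kappa>"
    using a unfolding arches_def by blast
  then obtain r where r: "r \<noteq> 0" "P = pt (r * \<kappa>^(q+1), r^q, r^(q^2) * \<kappa>)"
    unfolding Tplane_mem by blast
  have "r^(q-1) = \<kappa>^(q+1) * 1^q / (1 * \<theta>)"
    using P(1) line_cond[OF r(1) _ th, of 1 \<kappa>] r(2) by simp
  then have "\<kappa>^(q+1) = r^(q-1) * \<theta>" using th by (simp add: field_simps)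
  then have "normq q (\<kappa>^(q+1)) = normq q (r^(q-1)) * normq q \<theta>" by (simp add: N_mult)
  then show "normq q \<theta> = (normq q \<kappa>)^2" using N_root_one[OF r(1)] N_q1 by simp
next
  assume n: "normq q \<theta> = (normq q \<kappa>)^2"
  have "normq q (\<kappa>^(q+1) / \<theta>) = normq q (\<kappa>^(q+1)) / normq q \<theta>" by (rule N_divide)
  also have "\<dots> = 1" unfolding N_q1 n using N_nz[OF ka] by simp
  finally have "normq q (\<kappa>^(q+1) / \<theta>) = 1" .
  moreover have "\<kappa>^(q+1) / \<theta> \<noteq> 0" using th ka by simp
  ultimately obtain t where t: "t \<noteq> 0" "t^(q-1) = \<kappa>^(q+1) / \<theta>"
    using N_one_root by blast
  show "arches (sls_pencil q \<theta>) (Tplane q \<kappa>)"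
    unfolding arches_def
  proof
    fix L assume "L \<in> sls_pencil q \<theta>"
    then obtain x where x: "x \<noteq> 0" "L = Defs.join Tpt (pt (x * \<theta>, x^q, 0))"
      unfolding sls_mem by blast
    define r where "r = t * x"
    have r0: "r \<noteq> 0" using t x by (simp add: r_def)
    have "r^(q-1) = \<kappa>^(q+1) * x^q / (x * \<theta>)"
      using t x th by (simp add: r_def power_mult_distrib pow_q_split[of x])
    then have P0: "pt (r * \<kappa>^(q+1), r^q, r^(q^2) * \<kappa>) \<in> L"
      using line_cond[OF r0 x(1) th] x(2) by simp
    have P1: "pt (r * \<kappa>^(q+1), r^q, r^(q^2) * \<kappa>) \<in> Tplane q \<kappa>"
      unfolding Tplane_mem using r0 by blast
    show "\<exists>!P. P \<in> L \<and> P \<in> Tplane q \<kappa>"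
    proof (rule ex1I[of _ "pt (r * \<kappa>^(q+1), r^q, r^(q^2) * \<kappa>)"])
      show "pt (r * \<kappa>^(q+1), r^q, r^(q^2) * \<kappa>) \<in> L \<and> pt (r * \<kappa>^(q+1), r^q, r^(q^2) * \<kappa>) \<in> Tplane q \<kappa>"
        using P0 P1 by blast
    next
      fix P assume "P \<in> L \<and> P \<in> Tplane q \<kappa>"
      then obtain r' where r': "r' \<noteq> 0" "P = pt (r' * \<kappa>^(q+1), r'^q, r'^(q^2) * \<kappa>)" "P \<in> L"
        unfolding Tplane_mem by blast
      have "r'^(q-1) = \<kappa>^(q+1) * x^q / (x * \<theta>)"
        using line_cond[OF r'(1) x(1) th] x(2) r'(2,3) by simp
      then have "r'^(q-1) = r^(q-1)" using \<open>r^(q-1) = _\<close> by simp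
      then show "P = pt (r * \<kappa>^(q+1), r^q, r^(q^2) * \<kappa>)"
        using Tpt_r_eq[OF r0 r'(1)] r'(2) by simp
    qed
  qed
qed


lemma Tplane_sub:
  assumes k1: "(\<kappa>1::'a) \<noteq> 0" and k2: "\<kappa>2 \<noteq> 0" and n: "normq q \<kappa>1 = normq q \<kappa>2"
  shows "Tplane q \<kappa>2 \<subseteq> Tplane q \<kappa>1"
proof
  have "normq q (\<kappa>2 / \<kappa>1) = 1" using n N_nz[OF k1] by (simp add: N_divide)
  moreover have "\<kappa>2 / \<kappa>1 \<noteq> 0" using k1 k2 by simp
  ultimately obtain t where t: "t \<noteq> 0" "t^(q-1) = \<kappa>2 / \<kappa>1" using N_one_root by blast
  define u where "u = t^q"
  define w where "w = u^q"
  have u0: "u \<noteq> 0" using t by (simp add: u_def)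
  have w0: "w \<noteq> 0" using u0 by (simp add: w_def)
  have tq: "t^q = u" by (simp only: u_def)
  have uq: "u^q = w" by (simp only: w_def)
  have wq: "w^q = t"
  proof -
    have "w^q = ((t^q)^q)^q" by (simp only: w_def u_def)
    also have "\<dots> = t^(q^3)" by (simp only: power_mult[symmetric] power3_eq_cube)
    also have "\<dots> = t" by (rule frob3)
    finally show ?thesis .
  qed
  have "u = t * (\<kappa>2 / \<kappa>1)" using t(2) by (simp only: u_def pow_q_split[of t])
  then have kk: "\<kappa>2 = \<kappa>1 * u / t" using k1 t(1) by (rule aux_kk)
  fix P assume "P \<in> Tplane q \<kappa>2"
  then obtain r where r: "r \<noteq> 0" "P = pt (r * \<kappa>2^(q+1), r^q, r^(q^2) * \<kappa>2)"
    unfolding Tplane_mem by blast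
  define r' where "r' = r / (u * t)"
  define c where "c = w * u"
  have r'0: "r' \<noteq> 0" using r t u0 by (simp add: r'_def)
  have c0: "c \<noteq> 0" using w0 u0 by (simp add: c_def)
  have hu1: "u^(q+1) = w * u" by (simp only: power_add power_one_right uq)
  have ht1: "t^(q+1) = u * t" by (simp only: power_add power_one_right tq)
  have k2q: "\<kappa>2^(q+1) = \<kappa>1^(q+1) * w / t"
  proof -
    have "\<kappa>2^(q+1) = \<kappa>1^(q+1) * u^(q+1) / t^(q+1)" unfolding kk by (simp only: power_divide power_mult_distrib)
    also have "\<dots> = \<kappa>1^(q+1) * (w * u) / (u * t)" by (simp only: hu1 ht1)
    also have "\<dots> = \<kappa>1^(q+1) * w / t" by (rule aux_c1[OF u0])
    finally show ?thesis .
  qed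
  have rq: "r'^q = r^q / (w * u)"
    by (simp only: r'_def power_divide power_mult_distrib uq tq)
  have rqq: "(r^q)^q = r^(q^2)" by (simp only: power2_eq_square power_mult)
  have rq2: "r'^(q^2) = r^(q^2) / (t * w)"
  proof -
    have "r'^(q^2) = (r'^q)^q" by (simp only: power2_eq_square power_mult)
    also have "\<dots> = r^(q^2) / (t * w)" by (simp only: rq power_divide power_mult_distrib wq uq rqq)
    finally show ?thesis .
  qed
  have eq: "(r * \<kappa>2^(q+1), r^q, r^(q^2) * \<kappa>2) = sc3 c (r' * \<kappa>1^(q+1), r'^q, r'^(q^2) * \<kappa>1)"
  proof -
    have a1: "r * \<kappa>2^(q+1) = c * (r' * \<kappa>1^(q+1))"
      unfolding k2q c_def r'_def by (rule aux_a1[OF u0])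
    have a2: "r^q = c * r'^q"
      unfolding rq c_def by (rule aux_a2[OF u0 w0])
    have a3: "r^(q^2) * \<kappa>2 = c * (r'^(q^2) * \<kappa>1)"
      unfolding rq2 c_def kk by (rule aux_a3[OF w0])
    show ?thesis by (simp only: sc3_simp a1 a2 a3)
  qed
  have "P = pt (r' * \<kappa>1^(q+1), r'^q, r'^(q^2) * \<kappa>1)"
    unfolding r(2) eq by (rule pt_sc3[OF c0])
  then show "P \<in> Tplane q \<kappa>1" unfolding Tplane_mem using r'0 by blast
qed

lemma Tplane_eq:
  assumes k1: "(\<kappa>1::'a) \<noteq> 0" and k2: "\<kappa>2 \<noteq> 0"
  shows "Tplane q \<kappa>1 = Tplane q \<kappa>2 \<longleftrightarrow> normq q \<kappa>1 = normq q \<kappa>2"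
proof
  assume e: "Tplane q \<kappa>1 = Tplane q \<kappa>2"
  have "pt (1 * \<kappa>1^(q+1), 1^q, 1^(q^2) * \<kappa>1) \<in> Tplane q \<kappa>1"
    unfolding Tplane_mem by (rule exI[of _ 1]) simp
  then have "pt (1 * \<kappa>1^(q+1), 1^q, 1^(q^2) * \<kappa>1) \<in> Tplane q \<kappa>2" using e by simp
  then obtain r where r: "r \<noteq> 0" "pt (1 * \<kappa>1^(q+1), 1^q, 1^(q^2) * \<kappa>1) = pt (r * \<kappa>2^(q+1), r^q, r^(q^2) * \<kappa>2)"
    unfolding Tplane_mem by blast
  obtain c where c: "c \<noteq> 0" "(r * \<kappa>2^(q+1), r^q, r^(q^2) * \<kappa>2) = sc3 c (1 * \<kappa>1^(q+1), 1^q, 1^(q^2) * \<kappa>1)"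
    using pt_eq_imp[OF r(2)] by blast
  then have "r^q = c" and "r^(q^2) * \<kappa>2 = c * \<kappa>1" by simp_all
  then have "r^(q^2) * \<kappa>2 = r^q * \<kappa>1" by simp
  then have "normq q (r^(q^2) * \<kappa>2) = normq q (r^q * \<kappa>1)" by (rule arg_cong)
  then have "normq q (r^(q^2)) * normq q \<kappa>2 = normq q (r^q) * normq q \<kappa>1"
    by (simp only: N_mult)
  then show "normq q \<kappa>1 = normq q \<kappa>2" using N_nz[OF r(1)] by (simp add: N_powq N_powq2)
next
  assume "normq q \<kappa>1 = normq q \<kappa>2"
  then show "Tplane q \<kappa>1 = Tplane q \<kappa>2"
    using Tplane_sub[OF k1 k2] Tplane_sub[OF k2 k1] by auto
qed

lemma slsS_sub:
  assumes t1: "(\<theta>1::'a) \<noteq> 0" and t2: "\<theta>2 \<noteq> 0" and n: "normq q \<theta>1 = normq q \<theta>2"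
  shows "slsS q \<theta>1 \<subseteq> slsS q \<theta>2"
proof
  have "normq q (\<theta>1 / \<theta>2) = 1" using n N_nz[OF t2] by (simp add: N_divide)
  moreover have "\<theta>1 / \<theta>2 \<noteq> 0" using t1 t2 by simp
  ultimately obtain u where u: "u \<noteq> 0" "u^(q-1) = \<theta>1 / \<theta>2" using N_one_root by blast
  have "u^q = u * (\<theta>1 / \<theta>2)" using u(2) by (simp only: pow_q_split[of u])
  then have th1: "\<theta>1 = \<theta>2 * u^q / u" using u(1) t2 by (rule aux_th)
  have uq0: "u^q \<noteq> 0" using u by simp
  fix X assume "X \<in> slsS q \<theta>1"
  then obtain x where x: "x \<noteq> 0" "X = pt (x * \<theta>1, x^q, 0)" unfolding slsS_def by blast
  define x' where "x' = x / u"
  have x'0: "x' \<noteq> 0" using x u by (simp add: x'_def)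
  have b1: "x * \<theta>1 = u^q * (x' * \<theta>2)" unfolding th1 x'_def by (rule aux_x1[OF u(1)])
  have b2: "x^q = u^q * x'^q" unfolding x'_def power_divide by (rule aux_x2[OF uq0])
  have eq: "(x * \<theta>1, x^q, 0) = sc3 (u^q) (x' * \<theta>2, x'^q, 0)"
    by (simp only: sc3_simp b1 b2 mult_zero_right)
  have "X = pt (x' * \<theta>2, x'^q, 0)" unfolding x(2) eq by (rule pt_sc3[OF uq0])
  then show "X \<in> slsS q \<theta>2" unfolding slsS_def using x'0 by blast
qed

lemma sls_eq:
  assumes t1: "(\<theta>1::'a) \<noteq> 0" and t2: "\<theta>2 \<noteq> 0"
  shows "sls_pencil q \<theta>1 = sls_pencil q \<theta>2 \<longleftrightarrow> normq q \<theta>1 = normq q \<theta>2"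
proof
  assume e: "sls_pencil q \<theta>1 = sls_pencil q \<theta>2"
  have "Defs.join Tpt (pt (1 * \<theta>1, 1^q, 0)) \<in> sls_pencil q \<theta>1"
    unfolding sls_mem by (rule exI[of _ 1]) simp
  then have "Defs.join Tpt (pt (1 * \<theta>1, 1^q, 0)) \<in> sls_pencil q \<theta>2" using e by simp
  then obtain x where x: "x \<noteq> 0" "Defs.join Tpt (pt (1 * \<theta>1, 1^q, 0)) = Defs.join Tpt (pt (x * \<theta>2, x^q, 0))"
    unfolding sls_mem by blast
  have "pt (\<theta>1, 1, 0) \<in> Defs.join Tpt (pt (1 * \<theta>1, 1^q, 0))"
    by (subst on_line) simp_all
  then have "pt (\<theta>1, 1, 0) \<in> Defs.join Tpt (pt (x * \<theta>2, x^q, 0))" using x(2) by simp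
  then have "\<theta>1 * x^q = 1 * (x * \<theta>2)" by (subst (asm) on_line) (use x in simp_all)
  then have "normq q (\<theta>1 * x^q) = normq q (x * \<theta>2)" by simp
  then have "normq q \<theta>1 * normq q x = normq q x * normq q \<theta>2" by (simp only: N_mult N_powq)
  then show "normq q \<theta>1 = normq q \<theta>2" using N_nz[OF x(1)] by simp
next
  assume "normq q \<theta>1 = normq q \<theta>2"
  then have "slsS q \<theta>1 = slsS q \<theta>2"
    using slsS_sub[OF t1 t2] slsS_sub[OF t2 t1] by auto
  then show "sls_pencil q \<theta>1 = sls_pencil q \<theta>2" unfolding sls_pencil_def by simp
qed


lemma Fq_filter: "{b::'a. b^q = b \<and> b \<noteq> 0 \<and> P b} = (\<lambda>k. h^k) ` {k. k < q-1 \<and> P (h^k)}"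
proof (intro equalityI subsetI)
  fix b assume b: "b \<in> {b::'a. b^q = b \<and> b \<noteq> 0 \<and> P b}"
  then have "b \<in> {b::'a. b^q = b \<and> b \<noteq> 0}" by simp
  then obtain k where k: "k < q-1" "b = h^k" unfolding Fq_eq by blast
  then have "P (h^k)" using b by simp
  then show "b \<in> (\<lambda>k. h^k) ` {k. k < q-1 \<and> P (h^k)}" using k by blast
next
  fix b assume "b \<in> (\<lambda>k. h^k) ` {k. k < q-1 \<and> P (h^k)}"
  then obtain k where k: "k < q-1" "P (h^k)" "b = h^k" by blast
  then have "b \<in> (\<lambda>k. h ^ k) ` {..<q-1}" by blast
  then have "b \<in> {b::'a. b^q = b \<and> b \<noteq> 0}" unfolding Fq_eq .
  then show "b \<in> {b::'a. b^q = b \<and> b \<noteq> 0 \<and> P b}" using k by simp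
qed

lemma count_P: "card {sls_pencil q \<theta> | \<theta>::'a. \<theta> \<noteq> 0 \<and> P (normq q \<theta>)} = card {k. k < q-1 \<and> P (h^k)}"
proof -
  define D where "D = {\<theta>::'a. \<theta> \<noteq> 0 \<and> P (normq q \<theta>)}"
  have e1: "{sls_pencil q \<theta> | \<theta>::'a. \<theta> \<noteq> 0 \<and> P (normq q \<theta>)} = sls_pencil q ` D"
    unfolding D_def by blast
  have "card (sls_pencil q ` D) = card (normq q ` D)"
    by (rule card_image_eqrel) (use sls_eq in \<open>auto simp: D_def\<close>)
  also have "normq q ` D = {b::'a. b^q = b \<and> b \<noteq> 0 \<and> P b}"
  proof (intro equalityI subsetI)
    fix b assume "b \<in> normq q ` D"
    then obtain \<theta> where "\<theta> \<noteq> 0" "P (normq q \<theta>)" "b = normq q \<theta>" unfolding D_def by blast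
    then show "b \<in> {b::'a. b^q = b \<and> b \<noteq> 0 \<and> P b}" using N_q N_nz by simp
  next
    fix b assume b: "b \<in> {b::'a. b^q = b \<and> b \<noteq> 0 \<and> P b}"
    then obtain \<kappa> where "\<kappa> \<noteq> 0" "normq q \<kappa> = b" using N_surj by blast
    then show "b \<in> normq q ` D" unfolding D_def using b by blast
  qed
  also have "\<dots> = (\<lambda>k. h^k) ` {k. k < q-1 \<and> P (h^k)}" by (rule Fq_filter)
  also have "card \<dots> = card {k. k < q-1 \<and> P (h^k)}"
    by (rule card_image) (rule inj_on_subset[OF Fq_inj], blast)
  finally show ?thesis unfolding e1 .
qed

lemma card_even: "card {k::nat. k < 2*n \<and> even k} = n"
proof -
  have "{k::nat. k < 2*n \<and> even k} = (\<lambda>j. 2*j) ` {..<n}" by (auto elim!: evenE)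
  then show ?thesis by (simp add: card_image inj_on_def)
qed

lemma card_odd: "card {k::nat. k < 2*n \<and> \<not> even k} = n"
proof -
  have "{k::nat. k < 2*n \<and> \<not> even k} = (\<lambda>j. 2*j+1) ` {..<n}" by (auto elim!: oddE)
  then show ?thesis by (simp add: card_image inj_on_def)
qed

end

context ffq
begin

lemma count_sq: assumes "odd q"
  shows "card {sls_pencil q (\<theta>::'a) | \<theta>. \<theta> \<noteq> 0 \<and> nonzero_Fq_square q (normq q \<theta>)} = (q - 1) div 2"
proof -
  have "even (q-1)" using assms q2 by simp
  then obtain n where n: "q-1 = 2*n" by blast
  have "{k. k < q-1 \<and> nonzero_Fq_square q (h^k)} = {k. k < 2*n \<and> even k}"
    using sq_iff[OF assms] n by auto
  then show ?thesis using count_P[of "nonzero_Fq_square q"] card_even n by simp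
qed

lemma count_nsq: assumes "odd q"
  shows "card {sls_pencil q (\<theta>::'a) | \<theta>. \<theta> \<noteq> 0 \<and> \<not> nonzero_Fq_square q (normq q \<theta>)} = (q - 1) div 2"
proof -
  have "even (q-1)" using assms q2 by simp
  then obtain n where n: "q-1 = 2*n" by blast
  have "{k. k < q-1 \<and> \<not> nonzero_Fq_square q (h^k)} = {k. k < 2*n \<and> \<not> even k}"
    using sq_iff[OF assms] n by auto
  then show ?thesis using count_P[of "\<lambda>b. \<not> nonzero_Fq_square q b"] card_odd n by simp
qed

lemma count_all: "card (T_sls_pencils q :: ('a \<times> 'a \<times> 'a) set set set set) = q - 1"
proof -
  have "T_sls_pencils q = {sls_pencil q (\<theta>::'a) | \<theta>. \<theta> \<noteq> 0 \<and> (\<lambda>b. True) (normq q \<theta>)}"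
    unfolding T_sls_pencils_def by simp
  then show ?thesis using count_P[of "\<lambda>b. True"] by simp
qed


lemma Tplanes_mem: "PP \<in> T_planes q \<longleftrightarrow> (\<exists>\<kappa>::'a. \<kappa> \<noteq> 0 \<and> PP = Tplane q \<kappa>)"
  unfolding T_planes_def by blast

lemma Tsls_mem: "Pen \<in> (T_sls_pencils q :: ('a \<times> 'a \<times> 'a) set set set set) \<longleftrightarrow> (\<exists>\<theta>::'a. \<theta> \<noteq> 0 \<and> Pen = sls_pencil q \<theta>)"
  unfolding T_sls_pencils_def by blast

lemma even_A: assumes ev: "even q" and Pen: "Pen \<in> (T_sls_pencils q :: ('a \<times> 'a \<times> 'a) set set set set)"
  shows "\<exists>!PP. PP \<in> T_planes q \<and> arches Pen PP"
proof -
  obtain \<theta> :: 'a where th: "\<theta> \<noteq> 0" "Pen = sls_pencil q \<theta>" using Pen unfolding Tsls_mem by blast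
  define n where "n = normq q \<theta> ^ (q div 2)"
  have q2d: "2 * (q div 2) = q" using ev by simp
  have n2: "n^2 = normq q \<theta>"
  proof -
    have "n^2 = normq q \<theta> ^ (2 * (q div 2))" unfolding n_def by (simp only: power_mult[symmetric] mult.commute)
    also have "\<dots> = normq q \<theta>" by (simp only: q2d N_q)
    finally show ?thesis .
  qed
  have nq: "n^q = n"
  proof -
    have "n^q = (normq q \<theta> ^ q)^(q div 2)" unfolding n_def by (simp only: power_mult[symmetric] mult.commute)
    then show ?thesis unfolding N_q n_def .
  qed
  have n0: "n \<noteq> 0" unfolding n_def using N_nz[OF th(1)] by simp
  obtain \<kappa> where ka: "\<kappa> \<noteq> 0" "normq q \<kappa> = n" using N_surj[OF n0 nq] by blast
  show ?thesis
  proof (rule ex1I[of _ "Tplane q \<kappa>"])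
    show "Tplane q \<kappa> \<in> T_planes q \<and> arches Pen (Tplane q \<kappa>)"
      unfolding th(2) Tplanes_mem arches_iff[OF th(1) ka(1)] using ka n2 by auto
  next
    fix PP assume a: "PP \<in> T_planes q \<and> arches Pen PP"
    then obtain \<kappa>' :: 'a where k': "\<kappa>' \<noteq> 0" "PP = Tplane q \<kappa>'" unfolding Tplanes_mem by blast
    then have "normq q \<theta> = (normq q \<kappa>')^2" using a th arches_iff by blast
    then have "(normq q \<kappa>')^2 = n^2" using n2 by simp
    then have "normq q \<kappa>' = n" using even_sq_inj[OF ev N_nz[OF k'(1)] n0] by blast
    then show "PP = Tplane q \<kappa>" using k' ka Tplane_eq by simp
  qed
qed

lemma arch_B: assumes "Pen1 \<in> (T_sls_pencils q :: ('a \<times> 'a \<times> 'a) set set set set)" "Pen2 \<in> T_sls_pencils q"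
  "PP \<in> T_planes q" "arches Pen1 PP" "arches Pen2 PP"
  shows "Pen1 = Pen2"
proof -
  obtain \<theta>1 :: 'a where t1: "\<theta>1 \<noteq> 0" "Pen1 = sls_pencil q \<theta>1" using assms(1) unfolding Tsls_mem by blast
  obtain \<theta>2 :: 'a where t2: "\<theta>2 \<noteq> 0" "Pen2 = sls_pencil q \<theta>2" using assms(2) unfolding Tsls_mem by blast
  obtain \<kappa> :: 'a where k: "\<kappa> \<noteq> 0" "PP = Tplane q \<kappa>" using assms(3) unfolding Tplanes_mem by blast
  have "normq q \<theta>1 = (normq q \<kappa>)^2" using arches_iff[OF t1(1) k(1)] assms(4) t1 k by simp
  moreover have "normq q \<theta>2 = (normq q \<kappa>)^2" using arches_iff[OF t2(1) k(1)] assms(5) t2 k by simp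
  ultimately show ?thesis using sls_eq[OF t1(1) t2(1)] t1 t2 by simp
qed

lemma odd_C: assumes od: "odd q" and th: "(\<theta>::'a) \<noteq> 0" and sq: "nonzero_Fq_square q (normq q \<theta>)"
  shows "card {PP \<in> T_planes q. arches (sls_pencil q \<theta>) PP} = 2"
proof -
  obtain b where b: "b^q = b" "b \<noteq> 0" "normq q \<theta> = b^2" using sq unfolding nonzero_Fq_square_def by blast
  have mb: "(-b)^q = -b" using od b(1) by simp
  have mb0: "-b \<noteq> 0" using b(2) by simp
  obtain \<kappa>1 :: 'a where k1: "\<kappa>1 \<noteq> 0" "normq q \<kappa>1 = b" using N_surj[OF b(2) b(1)] by blast
  obtain \<kappa>2 :: 'a where k2: "\<kappa>2 \<noteq> 0" "normq q \<kappa>2 = -b" using N_surj[OF mb0 mb] by blast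
  have bne: "b \<noteq> -b"
  proof
    assume "b = -b"
    then have "b * (1 + 1) = 0" by (simp add: algebra_simps)
    then have "(1::'a) + 1 = 0" using b(2) by simp
    then have "(-1::'a) = 1" by (simp add: eq_neg_iff_add_eq_0)
    then show False using odd_neg1[OF od] by simp
  qed
  have "{PP \<in> T_planes q. arches (sls_pencil q \<theta>) PP} = {Tplane q \<kappa>1, Tplane q \<kappa>2}"
  proof (intro equalityI subsetI)
    fix PP assume a: "PP \<in> {PP \<in> T_planes q. arches (sls_pencil q \<theta>) PP}"
    then obtain \<kappa> :: 'a where k: "\<kappa> \<noteq> 0" "PP = Tplane q \<kappa>" unfolding Tplanes_mem by blast
    then have "(normq q \<kappa>)^2 = b^2" using a arches_iff[OF th k(1)] b(3) by simp
    then have "normq q \<kappa> = b \<or> normq q \<kappa> = -b" unfolding power2_eq_iff .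
    then have "Tplane q \<kappa> = Tplane q \<kappa>1 \<or> Tplane q \<kappa> = Tplane q \<kappa>2"
      using Tplane_eq[OF k(1) k1(1)] Tplane_eq[OF k(1) k2(1)] k1(2) k2(2) by simp
    then show "PP \<in> {Tplane q \<kappa>1, Tplane q \<kappa>2}" using k(2) by blast
  next
    have m1: "Tplane q \<kappa>1 \<in> T_planes q" unfolding Tplanes_mem using k1(1) by blast
    have m2: "Tplane q \<kappa>2 \<in> T_planes q" unfolding Tplanes_mem using k2(1) by blast
    have a1: "arches (sls_pencil q \<theta>) (Tplane q \<kappa>1)" unfolding arches_iff[OF th k1(1)] k1(2) b(3) ..
    have a2: "arches (sls_pencil q \<theta>) (Tplane q \<kappa>2)" unfolding arches_iff[OF th k2(1)] k2(2) b(3) by simp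
    fix PP assume "PP \<in> {Tplane q \<kappa>1, Tplane q \<kappa>2}"
    then show "PP \<in> {PP \<in> T_planes q. arches (sls_pencil q \<theta>) PP}"
      using m1 m2 a1 a2 by blast
  qed
  moreover have "Tplane q \<kappa>1 \<noteq> Tplane q \<kappa>2" using Tplane_eq[OF k1(1) k2(1)] k1 k2 bne by simp
  ultimately show ?thesis by simp
qed

lemma odd_D: assumes th: "(\<theta>::'a) \<noteq> 0" and nsq: "\<not> nonzero_Fq_square q (normq q \<theta>)"
  shows "\<not> (\<exists>PP \<in> T_planes q. arches (sls_pencil q \<theta>) PP)"
proof
  assume "\<exists>PP \<in> T_planes q. arches (sls_pencil q \<theta>) PP"
  then obtain PP where PP: "PP \<in> T_planes q" "arches (sls_pencil q \<theta>) PP" by blast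
  from PP(1) obtain \<kappa> :: 'a where k0: "\<kappa> \<noteq> 0" "PP = Tplane q \<kappa>"
    unfolding Tplanes_mem by blast
  have k: "\<kappa> \<noteq> 0" "arches (sls_pencil q \<theta>) (Tplane q \<kappa>)" using k0 PP(2) by simp_all
  then have "normq q \<theta> = (normq q \<kappa>)^2" using arches_iff[OF th k(1)] by simp
  then have "nonzero_Fq_square q (normq q \<theta>)"
    unfolding nonzero_Fq_square_def using N_q[of \<kappa>] N_nz[OF k(1)] by (intro exI[of _ "normq q \<kappa>"]) simp
  then show False using nsq by simp
qed

end

theorem corollary6p2:
  fixes q :: nat
  assumes card: "card (UNIV :: 'a::{finite,field} set) = q ^ 3"
    and pp: "\<exists>p k. prime p \<and> 0 < k \<and> q = p ^ k"
  shows "(even q \<longrightarrow>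
            card (T_sls_pencils q :: ('a \<times> 'a \<times> 'a) set set set set) = q - 1 \<and>
            (\<forall>Pen \<in> (T_sls_pencils q :: ('a \<times> 'a \<times> 'a) set set set set).
                \<exists>!Pi. Pi \<in> T_planes q \<and> arches Pen Pi) \<and>
            (\<forall>Pen1 \<in> (T_sls_pencils q :: ('a \<times> 'a \<times> 'a) set set set set).
             \<forall>Pen2 \<in> T_sls_pencils q. \<forall>Pi \<in> T_planes q.
                arches Pen1 Pi \<and> arches Pen2 Pi \<longrightarrow> Pen1 = Pen2))
       \<and> (odd q \<longrightarrow>
            card {sls_pencil q (\<theta>::'a) | \<theta>. \<theta> \<noteq> 0 \<and> nonzero_Fq_square q (normq q \<theta>)}
              = (q - 1) div 2 \<and>
            (\<forall>\<theta>::'a. \<theta> \<noteq> 0 \<and> nonzero_Fq_square q (normq q \<theta>) \<longrightarrow>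
                card {Pi \<in> T_planes q. arches (sls_pencil q \<theta>) Pi} = 2) \<and>
            card {sls_pencil q (\<theta>::'a) | \<theta>. \<theta> \<noteq> 0 \<and> \<not> nonzero_Fq_square q (normq q \<theta>)}
              = (q - 1) div 2 \<and>
            (\<forall>\<theta>::'a. \<theta> \<noteq> 0 \<and> \<not> nonzero_Fq_square q (normq q \<theta>) \<longrightarrow>
                \<not> (\<exists>Pi \<in> T_planes q. arches (sls_pencil q \<theta>) Pi)))"
proof -
  obtain p k where pk: "prime p" "0 < k" "q = p ^ k" using pp by blast
  have "p \<ge> 2" using pk(1) by (rule prime_ge_2_nat)
  then have "p ^ 1 \<le> p ^ k" using pk(2) by (intro power_increasing) auto
  then have q2: "2 \<le> q" using \<open>p \<ge> 2\<close> pk(3) by simp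
  obtain g :: 'a where g: "g \<noteq> 0" "\<forall>x. x \<noteq> 0 \<longrightarrow> (\<exists>i. x = g ^ i)"
    "\<forall>n. g ^ n = 1 \<longleftrightarrow> (card (UNIV::'a set) - 1) dvd n"
    using finite_field_gen by blast
  interpret F: ffq q g
    by unfold_locales (use card q2 g in auto)
  show ?thesis
    apply (intro conjI impI)
    subgoal by (rule F.count_all)
    subgoal apply (rule ballI) apply (rule F.even_A) by assumption+
    subgoal apply (intro ballI impI, elim conjE) apply (rule F.arch_B) by assumption+
    subgoal by (rule F.count_sq)
    subgoal apply (intro allI impI, elim conjE) apply (rule F.odd_C) by assumption+
    subgoal by (rule F.count_nsq)
    subgoal apply (intro allI impI, elim conjE) apply (rule F.odd_D) by assumption+
    done
qed

end
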